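(* Let $m\ge 1$, $\varphi_0>0$ and $\varphi_1\ge 0$. For $\mathbf{g}\in\mathbb{R}^m$ define $$\hat T(\mathbf{g}) = \varphi_0\big(\max(\mathbf{g})-\min(\mathbf{g})\big)^2+\varphi_1\big(\max(\mathbf{g})-\min(\mathbf{g})\big).$$ Then: (i) $\hat T$ is a convex function on $\mathbb{R}^m$. (ii) Its Legendre–Fenchel conjugate $\hat T^*(\boldsymbol\lambda)=\sup_{\mathbf{g}\in\mathbb{R}^m}\big(\mathbf{g}\cdot\boldsymbol\lambda-\hat T(\mathbf{g})\big)$ is given, for every $\boldsymbol\lambda\in\mathbb{R}^m$, by $$\hat T^*(\boldsymbol\lambda)=\begin{cases} s(\|\boldsymbol\lambda\|_1/2) & \text{if } \sum_c\lambda_c=0,\\ +\infty & \text{otherwise,}\end{cases}\qquad s(x)=\begin{cases}\frac{(x-\varphi_1)^2}{4\varphi_0} & x\ge\varphi_1,\\ 0 & x<\varphi_1.\end{cases}$$ (iii) For every $\mathbf{g}\in\mathbb{R}^m$, $\hat T(\mathbf{g})=\hat T^{**}(\mathbf{g})=\sup_{\boldsymbol\lambda\in\mathbb{R}^m}\big(\mathbf{g}\cdot\boldsymbol\lambda-\hat T^*(\boldsymbol\lambda)\big)$.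
   Context: $\max(\mathbf{g})$ and $\min(\mathbf{g})$ denote the largest and smallest components of the vector $\mathbf{g}$, and $\|\cdot\|_1$ is the $\ell_1$ norm. *)

theory Defs
  imports "HOL-Analysis.Analysis"
begin

definition vmax :: "real ^ 'm \<Rightarrow> real" where
  "vmax g = Max (range (\<lambda>i. g $ i))"

definition vmin :: "real ^ 'm \<Rightarrow> real" where
  "vmin g = Min (range (\<lambda>i. g $ i))"

definition That :: "real \<Rightarrow> real \<Rightarrow> real ^ 'm \<Rightarrow> real" where
  "That \<phi>0 \<phi>1 g = \<phi>0 * (vmax g - vmin g)^2 + \<phi>1 * (vmax g - vmin g)"

definition conjT :: "real \<Rightarrow> real \<Rightarrow> real ^ 'm \<Rightarrow> ereal" where
  "conjT \<phi>0 \<phi>1 lam = (SUP g. ereal (g \<bullet> lam - That \<phi>0 \<phi>1 g))"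

definition biconjT :: "real \<Rightarrow> real \<Rightarrow> real ^ 'm \<Rightarrow> ereal" where
  "biconjT \<phi>0 \<phi>1 g = (SUP lam. ereal (g \<bullet> lam) - conjT \<phi>0 \<phi>1 lam)"

definition sfun :: "real \<Rightarrow> real \<Rightarrow> real \<Rightarrow> real" where
  "sfun \<phi>0 \<phi>1 x = (if x \<ge> \<phi>1 then (x - \<phi>1)^2 / (4 * \<phi>0) else 0)"

definition l1norm :: "real ^ 'm \<Rightarrow> real" where
  "l1norm lam = (\<Sum>i\<in>UNIV. \<bar>lam $ i\<bar>)"

end

theory Submission
  imports Defs
begin

lemma vmax_ge: "g $ i \<le> vmax g"
  unfolding vmax_def by (rule Max_ge) auto

lemma vmin_le: "vmin g \<le> g $ i"
  unfolding vmin_def by (rule Min_le) auto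

lemma vmax_ex: "\<exists>i. g $ i = vmax g"
proof -
  have "vmax g \<in> range (\<lambda>i. g $ i)" unfolding vmax_def by (rule Max_in) auto
  then show ?thesis by auto
qed

lemma vmin_ex: "\<exists>i. g $ i = vmin g"
proof -
  have "vmin g \<in> range (\<lambda>i. g $ i)" unfolding vmin_def by (rule Min_in) auto
  then show ?thesis by auto
qed

lemma vmax_le: "(\<And>i. g $ i \<le> b) \<Longrightarrow> vmax g \<le> b"
  using vmax_ex by metis

lemma vmin_ge: "(\<And>i. b \<le> g $ i) \<Longrightarrow> b \<le> vmin g"
  using vmin_ex by metis

lemma D_nonneg: "vmax g - vmin g \<ge> 0"
  using vmax_ge[of g] vmin_le[of g] by (metis diff_ge_0_iff_ge order_trans)

lemma inner_sum: "g \<bullet> lam = (\<Sum>i\<in>UNIV. g $ i * lam $ i)"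
  by (simp add: inner_vec_def)

lemma keyA:
  fixes g lam :: "real ^ 'm"
  assumes "(\<Sum>c\<in>UNIV. lam $ c) = 0"
  shows "g \<bullet> lam \<le> (vmax g - vmin g) * (l1norm lam / 2)"
proof -
  define c where "c = (vmax g + vmin g) / 2"
  have "g \<bullet> lam = (\<Sum>i\<in>UNIV. g $ i * lam $ i) - c * (\<Sum>i\<in>UNIV. lam $ i)"
    using assms by (simp add: inner_sum)
  also have "\<dots> = (\<Sum>i\<in>UNIV. (g $ i - c) * lam $ i)"
    by (simp add: sum_distrib_left sum_subtractf left_diff_distrib)
  also have "\<dots> \<le> (\<Sum>i\<in>UNIV. (vmax g - vmin g) / 2 * \<bar>lam $ i\<bar>)"
  proof (rule sum_mono)
    fix i
    have "\<bar>g $ i - c\<bar> \<le> (vmax g - vmin g) / 2"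
      using vmax_ge[of g i] vmin_le[of g i] unfolding c_def abs_le_iff by (auto simp: field_simps)
    hence "\<bar>g $ i - c\<bar> * \<bar>lam $ i\<bar> \<le> (vmax g - vmin g) / 2 * \<bar>lam $ i\<bar>"
      by (rule mult_right_mono) simp
    moreover have "(g $ i - c) * lam $ i \<le> \<bar>g $ i - c\<bar> * \<bar>lam $ i\<bar>"
      by (metis abs_ge_self abs_mult)
    ultimately show "(g $ i - c) * lam $ i \<le> (vmax g - vmin g) / 2 * \<bar>lam $ i\<bar>" by linarith
  qed
  also have "\<dots> = (vmax g - vmin g) / 2 * l1norm lam"
    unfolding l1norm_def by (rule sum_distrib_left[symmetric])
  also have "\<dots> = (vmax g - vmin g) * (l1norm lam / 2)" by simp
  finally show ?thesis .
qed

lemma quadineq: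
  fixes D x p0 p1 :: real
  assumes "p0 > 0" "D \<ge> 0"
  shows "D * x - (p0 * D^2 + p1 * D) \<le> sfun p0 p1 x"
proof (cases "x \<ge> p1")
  case True
  have "0 \<le> (2*p0*D - (x - p1))^2 / (4*p0)" using assms by simp
  also have "(2*p0*D - (x - p1))^2 / (4*p0) = (x - p1)^2/(4*p0) - (D * x - (p0 * D^2 + p1 * D))"
    using assms by (simp add: field_simps power2_eq_square)
  finally show ?thesis using True by (simp add: sfun_def)
next
  case False
  have "D * (x - p1) \<le> 0" using False assms by (simp add: mult_nonneg_nonpos)
  moreover have "p0 * D^2 \<ge> 0" using assms by simp
  ultimately show ?thesis using False by (simp add: sfun_def algebra_simps)
qed

lemma That_const: "That p0 p1 (vec t :: real ^ 'm) = 0"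
proof -
  have "vmax (vec t :: real ^ 'm) = t" "vmin (vec t :: real ^ 'm) = t"
    by (simp_all add: vmax_def vmin_def)
  thus ?thesis by (simp add: That_def)
qed

lemma conj_le:
  fixes lam :: "real ^ 'm"
  assumes "p0 > 0" "(\<Sum>c\<in>UNIV. lam $ c) = 0"
  shows "conjT p0 p1 lam \<le> ereal (sfun p0 p1 (l1norm lam / 2))"
  unfolding conjT_def
proof (rule SUP_least)
  fix g :: "real ^ 'm"
  have "g \<bullet> lam - That p0 p1 g \<le> (vmax g - vmin g) * (l1norm lam / 2) - That p0 p1 g"
    using keyA[OF assms(2)] by simp
  also have "\<dots> \<le> sfun p0 p1 (l1norm lam / 2)"
    unfolding That_def by (rule quadineq[OF assms(1) D_nonneg])
  finally show "ereal (g \<bullet> lam - That p0 p1 g) \<le> ereal (sfun p0 p1 (l1norm lam / 2))" by simp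
qed

lemma conj_ge:
  fixes lam :: "real ^ 'm"
  assumes p0: "p0 > 0" and p1: "p1 \<ge> 0" and s0: "(\<Sum>c\<in>UNIV. lam $ c) = 0"
  shows "ereal (sfun p0 p1 (l1norm lam / 2)) \<le> conjT p0 p1 lam"
proof (cases "l1norm lam / 2 > p1")
  case False
  have "sfun p0 p1 (l1norm lam / 2) \<le> 0"
    using False by (cases "l1norm lam / 2 = p1") (auto simp: sfun_def)
  also have "0 = (0::real ^ 'm) \<bullet> lam - That p0 p1 (0::real^'m)"
    using That_const[of p0 p1 0] by (simp add: inner_sum)
  finally show ?thesis unfolding conjT_def
    by (intro SUP_upper2[of 0]) auto
next
  case True
  define x where "x = l1norm lam / 2"
  define D where "D = (x - p1) / (2 * p0)"
  have Dpos: "D > 0" using True p0 unfolding D_def x_def by simp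
  define g :: "real ^ 'm" where "g = (\<chi> c. if lam $ c > 0 then D else 0)"
  have ex_ne: "\<exists>c. lam $ c \<noteq> 0"
  proof (rule ccontr)
    assume "\<not> ?thesis"
    hence "l1norm lam = 0" by (simp add: l1norm_def)
    thus False using True p1 by simp
  qed
  have expos: "\<exists>c. lam $ c > 0"
  proof (rule ccontr)
    assume "\<not> ?thesis"
    hence "\<forall>c. lam $ c \<le> 0" by (meson not_less)
    moreover have "(\<Sum>c\<in>UNIV. - lam $ c) = 0" using s0 by (simp add: sum_negf)
    ultimately have "\<forall>c\<in>UNIV. - lam $ c = 0" using sum_nonneg_eq_0_iff[of UNIV "\<lambda>c. - lam $ c"] by auto
    thus False using ex_ne by auto
  qed
  have exneg: "\<exists>c. \<not> lam $ c > 0"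
  proof (rule ccontr)
    assume "\<not> ?thesis"
    hence "\<forall>c. lam $ c > 0" by auto
    hence "(\<Sum>c\<in>UNIV. lam $ c) > 0" by (simp add: sum_pos)
    thus False using s0 by simp
  qed
  have "vmax g = D"
  proof (rule antisym)
    show "vmax g \<le> D" by (rule vmax_le) (use Dpos in \<open>auto simp: g_def\<close>)
    obtain c where "lam $ c > 0" using expos by auto
    hence "g $ c = D" by (simp add: g_def)
    thus "D \<le> vmax g" using vmax_ge[of g c] by simp
  qed
  moreover have "vmin g = 0"
  proof (rule antisym)
    obtain c where "\<not> lam $ c > 0" using exneg by auto
    hence "g $ c = 0" by (simp add: g_def)
    thus "vmin g \<le> 0" using vmin_le[of g c] by simp
    show "0 \<le> vmin g" by (rule vmin_ge) (use Dpos in \<open>auto simp: g_def\<close>)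
  qed
  ultimately have Tg: "That p0 p1 g = p0 * D^2 + p1 * D" by (simp add: That_def)
  have "g \<bullet> lam = (\<Sum>i\<in>UNIV. D * ((\<bar>lam $ i\<bar> + lam $ i) / 2))"
    unfolding inner_sum by (rule sum.cong) (auto simp: g_def)
  also have "\<dots> = D * ((l1norm lam + (\<Sum>i\<in>UNIV. lam $ i)) / 2)"
    by (simp add: l1norm_def sum_distrib_left[symmetric] sum.distrib sum_divide_distrib[symmetric])
  also have "\<dots> = D * x" using s0 by (simp add: x_def)
  finally have gl: "g \<bullet> lam = D * x" .
  have "sfun p0 p1 (l1norm lam / 2) = g \<bullet> lam - That p0 p1 g"
    unfolding gl Tg using True p0 unfolding sfun_def x_def[symmetric] D_def
    by (simp add: field_simps power2_eq_square)
  thus ?thesis unfolding conjT_def by (intro SUP_upper2[of g]) auto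
qed

lemma conj_inf:
  fixes lam :: "real ^ 'm"
  assumes "(\<Sum>c\<in>UNIV. lam $ c) \<noteq> 0"
  shows "conjT p0 p1 lam = \<infinity>"
proof -
  let ?S = "(\<Sum>c\<in>UNIV. lam $ c)"
  have "\<exists>g. y < ereal (g \<bullet> lam - That p0 p1 g)" if "y < \<infinity>" for y
  proof -
    have "\<exists>r. y \<le> ereal r" using that by (cases y) auto
    then obtain r where r: "y \<le> ereal r" by blast
    define t where "t = (\<bar>r\<bar> + 1) / ?S"
    have "(vec t :: real ^ 'm) \<bullet> lam = t * ?S"
      by (simp add: inner_sum sum_distrib_left)
    also have "\<dots> = \<bar>r\<bar> + 1" using assms by (simp add: t_def)
    finally have vl: "(vec t :: real ^ 'm) \<bullet> lam = \<bar>r\<bar> + 1" .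
    have "y < ereal ((vec t :: real ^ 'm) \<bullet> lam - That p0 p1 (vec t :: real ^ 'm))"
    proof -
      have "ereal r < ereal (\<bar>r\<bar> + 1)" by simp
      with r have "y < ereal (\<bar>r\<bar> + 1)" by (rule order_le_less_trans)
      thus ?thesis using That_const[of p0 p1 t] vl by (metis diff_zero)
    qed
    thus ?thesis by blast
  qed
  hence "(SUP g. ereal (g \<bullet> lam - That p0 p1 g)) = top"
    unfolding SUP_eq_top_iff by (simp add: top_ereal_def)
  thus ?thesis unfolding conjT_def by (simp add: top_ereal_def)
qed

lemma conj_formula:
  fixes lam :: "real ^ 'm"
  assumes "p0 > 0" "p1 \<ge> 0"
  shows "conjT p0 p1 lam =
     (if (\<Sum>c\<in>UNIV. lam $ c) = 0 then ereal (sfun p0 p1 (l1norm lam / 2)) else \<infinity>)"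
  using conj_le[OF assms(1)] conj_ge[OF assms] conj_inf by (auto intro: antisym)

lemma sq_convex:
  fixes a u v :: real
  assumes "0 \<le> a" "a \<le> 1"
  shows "((1 - a) * u + a * v)^2 \<le> (1 - a) * u^2 + a * v^2"
proof -
  have "(1 - a) * u^2 + a * v^2 - ((1 - a) * u + a * v)^2 = a * (1 - a) * (u - v)^2"
    by (simp add: algebra_simps power2_eq_square)
  moreover have "a * (1 - a) * (u - v)^2 \<ge> 0" using assms by simp
  ultimately show ?thesis by linarith
qed

lemma That_convex:
  assumes "p0 > 0" "p1 \<ge> 0"
  shows "convex_on UNIV (That p0 p1 :: real ^ 'm \<Rightarrow> real)"
proof (rule convex_onI)
  show "convex (UNIV :: (real ^ 'm) set)" by simp
  fix t :: real and x y :: "real ^ 'm"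
  assume t: "0 < t" "t < 1"
  let ?z = "(1 - t) *\<^sub>R x + t *\<^sub>R y"
  have mx: "vmax ?z \<le> (1 - t) * vmax x + t * vmax y"
  proof (rule vmax_le)
    fix i
    have "(1 - t) * x $ i \<le> (1 - t) * vmax x" using t vmax_ge[of x i] by (intro mult_left_mono) auto
    moreover have "t * y $ i \<le> t * vmax y" using t vmax_ge[of y i] by (intro mult_left_mono) auto
    ultimately show "?z $ i \<le> (1 - t) * vmax x + t * vmax y" by simp
  qed
  have mn: "(1 - t) * vmin x + t * vmin y \<le> vmin ?z"
  proof (rule vmin_ge)
    fix i
    have "(1 - t) * vmin x \<le> (1 - t) * x $ i" using t vmin_le[of x i] by (intro mult_left_mono) auto
    moreover have "t * vmin y \<le> t * y $ i" using t vmin_le[of y i] by (intro mult_left_mono) auto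
    ultimately show "(1 - t) * vmin x + t * vmin y \<le> ?z $ i" by simp
  qed
  define Dz where "Dz = vmax ?z - vmin ?z"
  define Dx where "Dx = vmax x - vmin x"
  define Dy where "Dy = vmax y - vmin y"
  have Dle: "Dz \<le> (1 - t) * Dx + t * Dy" using mx mn unfolding Dz_def Dx_def Dy_def by (simp add: algebra_simps)
  have Dz0: "Dz \<ge> 0" unfolding Dz_def by (rule D_nonneg)
  have "Dz^2 \<le> ((1 - t) * Dx + t * Dy)^2" using Dle Dz0 by (intro power_mono) auto
  also have "\<dots> \<le> (1 - t) * Dx^2 + t * Dy^2" using t by (intro sq_convex) auto
  finally have q: "p0 * Dz^2 \<le> p0 * ((1 - t) * Dx^2 + t * Dy^2)" using assms by simp
  have l: "p1 * Dz \<le> p1 * ((1 - t) * Dx + t * Dy)" using Dle assms by (intro mult_left_mono) auto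
  have "That p0 p1 ?z = p0 * Dz^2 + p1 * Dz" by (simp add: That_def Dz_def)
  also have "\<dots> \<le> p0 * ((1 - t) * Dx^2 + t * Dy^2) + p1 * ((1 - t) * Dx + t * Dy)" using q l by linarith
  also have "\<dots> = (1 - t) * That p0 p1 x + t * That p0 p1 y"
    by (simp add: That_def Dx_def Dy_def algebra_simps)
  finally show "That p0 p1 ?z \<le> (1 - t) * That p0 p1 x + t * That p0 p1 y" .
qed

lemma biconj_le:
  fixes g :: "real ^ 'm"
  assumes "p0 > 0" "p1 \<ge> 0"
  shows "biconjT p0 p1 g \<le> ereal (That p0 p1 g)"
  unfolding biconjT_def
proof (rule SUP_least)
  fix lam :: "real ^ 'm"
  show "ereal (g \<bullet> lam) - conjT p0 p1 lam \<le> ereal (That p0 p1 g)"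
  proof (cases "(\<Sum>c\<in>UNIV. lam $ c) = 0")
    case True
    have "g \<bullet> lam - sfun p0 p1 (l1norm lam / 2) \<le> (vmax g - vmin g) * (l1norm lam / 2) - sfun p0 p1 (l1norm lam / 2)"
      using keyA[OF True] by simp
    also have "\<dots> \<le> That p0 p1 g"
      using quadineq[OF assms(1) D_nonneg, of g "l1norm lam / 2" p1] unfolding That_def by linarith
    finally show ?thesis using conj_formula[OF assms, of lam] True by simp
  next
    case False
    thus ?thesis using conj_formula[OF assms, of lam] by simp
  qed
qed

lemma biconj_ge:
  fixes g :: "real ^ 'm"
  assumes p0: "p0 > 0" and p1: "p1 \<ge> 0"
  shows "ereal (That p0 p1 g) \<le> biconjT p0 p1 g"
proof (cases "vmax g - vmin g = 0")
  case True
  have "That p0 p1 g = 0" using True by (simp add: That_def)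
  moreover have "sfun p0 p1 (l1norm (0::real^'m) / 2) = 0" using p1 by (simp add: sfun_def l1norm_def)
  hence "conjT p0 p1 (0::real^'m) = 0"
    using conj_formula[OF assms, of 0] p1 by (simp add: l1norm_def sfun_def zero_ereal_def)
  ultimately have "ereal (That p0 p1 g) = ereal (g \<bullet> 0) - conjT p0 p1 (0::real^'m)"
    by (simp add: zero_ereal_def)
  thus ?thesis unfolding biconjT_def by (intro SUP_upper2[of 0]) auto
next
  case False
  define D where "D = vmax g - vmin g"
  have Dpos: "D > 0" using False D_nonneg[of g] unfolding D_def by linarith
  obtain i where i: "g $ i = vmax g" using vmax_ex by blast
  obtain j where j: "g $ j = vmin g" using vmin_ex by blast
  have ij: "i \<noteq> j" using i j Dpos unfolding D_def by auto
  define x where "x = p1 + 2 * p0 * D"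
  have x0: "x \<ge> 0" using p0 p1 Dpos unfolding x_def by simp
  define lam :: "real ^ 'm" where "lam = (\<chi> c. (if c = i then x else 0) - (if c = j then x else 0))"
  have s0: "(\<Sum>c\<in>UNIV. lam $ c) = 0"
    by (simp add: lam_def sum_subtractf)
  have "l1norm lam = (\<Sum>c\<in>UNIV. (if c = i then x else 0) + (if c = j then x else 0))"
    unfolding l1norm_def by (rule sum.cong) (use ij x0 in \<open>auto simp: lam_def\<close>)
  also have "\<dots> = 2 * x" by (simp add: sum.distrib)
  finally have l1: "l1norm lam / 2 = x" by simp
  have "g \<bullet> lam = (\<Sum>c\<in>UNIV. (if c = i then g $ i * x else 0) - (if c = j then g $ j * x else 0))"
    unfolding inner_sum by (rule sum.cong) (auto simp: lam_def algebra_simps)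
  also have "\<dots> = x * D" by (simp add: sum_subtractf D_def i j algebra_simps)
  finally have gl: "g \<bullet> lam = x * D" .
  have "x * D - sfun p0 p1 x = That p0 p1 g"
    using p0 Dpos unfolding That_def D_def[symmetric] sfun_def x_def
    by (simp add: field_simps power2_eq_square)
  hence "ereal (That p0 p1 g) = ereal (g \<bullet> lam) - conjT p0 p1 lam"
    using conj_formula[OF assms, of lam] s0 l1 gl by simp
  thus ?thesis unfolding biconjT_def by (intro SUP_upper2[of lam]) auto
qed

theorem mainTheorem1:
  fixes \<phi>0 \<phi>1 :: real
  assumes "\<phi>0 > 0" and "\<phi>1 \<ge> 0"
  shows "convex_on UNIV (That \<phi>0 \<phi>1 :: real ^ 'm \<Rightarrow> real) \<and>
    (\<forall>lam :: real ^ 'm. conjT \<phi>0 \<phi>1 lam =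
           (if (\<Sum>c\<in>UNIV. lam $ c) = 0 then ereal (sfun \<phi>0 \<phi>1 (l1norm lam / 2)) else \<infinity>)) \<and>
    (\<forall>g :: real ^ 'm. ereal (That \<phi>0 \<phi>1 g) = biconjT \<phi>0 \<phi>1 g)"
proof (intro conjI allI)
  show "convex_on UNIV (That \<phi>0 \<phi>1 :: real ^ 'm \<Rightarrow> real)" by (rule That_convex[OF assms])
  fix lam :: "real ^ 'm"
  show "conjT \<phi>0 \<phi>1 lam =
           (if (\<Sum>c\<in>UNIV. lam $ c) = 0 then ereal (sfun \<phi>0 \<phi>1 (l1norm lam / 2)) else \<infinity>)"
    by (rule conj_formula[OF assms])
next
  fix g :: "real ^ 'm"
  show "ereal (That \<phi>0 \<phi>1 g) = biconjT \<phi>0 \<phi>1 g"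
    using biconj_le[OF assms, of g] biconj_ge[OF assms, of g] by (rule antisym[rotated])
qed

end
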